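(* Let $\mathcal{O}$ be a complete discrete valuation ring with field of fractions $K$. Consider the game of degree $d = 3$ in which Nora and Wanda choose the polynomial coefficients from $\mathcal{O}$. Then Wanda has a winning strategy (whether she moves first or second), i.e. she can always ensure that the final polynomial has a root in $K$.
   Context: The game: Nora and Wanda alternately choose coefficients of $f(x) = a_3 x^3 + a_2 x^2 + a_1 x + a_0$; on each move the current player picks a not-yet-chosen coefficient and assigns it a value in $\mathcal{O}$, subject to $a_3 \neq 0$, $a_0 \neq 0$. After all four coefficients are chosen, Wanda wins if $f$ has a root in $K = \operatorname{Frac}(\mathcal{O})$, and Nora wins otherwise. *)

theory Defs
  imports "HOL-Computational_Algebra.Polynomial" "HOL-Computational_Algebra.Fraction_Field"
begin

definition is_uniformizer :: "'a::idom \<Rightarrow> bool" where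
  "is_uniformizer p \<longleftrightarrow> p \<noteq> 0 \<and> \<not> p dvd 1 \<and>
     (\<forall>x. x \<noteq> 0 \<longrightarrow> (\<exists>u n. u dvd 1 \<and> x = u * p ^ n))"

definition dvr :: "'a::idom itself \<Rightarrow> bool" where
  "dvr _ \<longleftrightarrow> (\<exists>p::'a. is_uniformizer p)"

text \<open>Completeness for the pi-adic topology: every pi-adically Cauchy sequence
(normalised so that consecutive terms agree mod pi^n) converges.\<close>
definition complete_dvr :: "'a::idom itself \<Rightarrow> bool" where
  "complete_dvr T \<longleftrightarrow> dvr T \<and>
     (\<forall>p::'a. is_uniformizer p \<longrightarrow>
        (\<forall>s::nat \<Rightarrow> 'a. (\<forall>n. p ^ n dvd (s (Suc n) - s n)) \<longrightarrow>
           (\<exists>x. \<forall>n. p ^ n dvd (x - s n))))"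

definition cubic :: "(nat \<Rightarrow> 'a::idom) \<Rightarrow> 'a poly" where
  "cubic a = [:a 0, a 1, a 2, a 3:]"

definition has_root_in_frac :: "'a::idom poly \<Rightarrow> bool" where
  "has_root_in_frac f \<longleftrightarrow> (\<exists>x :: 'a fract. poly (map_poly (\<lambda>c. Fract c 1) f) x = 0)"

definition legal_move :: "(nat \<Rightarrow> 'a::idom option) \<Rightarrow> nat \<Rightarrow> 'a \<Rightarrow> bool" where
  "legal_move s i c \<longleftrightarrow> i \<le> 3 \<and> s i = None \<and> ((i = 0 \<or> i = 3) \<longrightarrow> c \<noteq> 0)"

text \<open>wanda_wins k w s: in position s (partial assignment of coefficients) with k moves
remaining, w = True iff it is Wanda's turn, Wanda can force a win.
For a finite game of fixed length this is exactly the existence of a winning strategy.\<close>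
fun wanda_wins :: "nat \<Rightarrow> bool \<Rightarrow> (nat \<Rightarrow> 'a::idom option) \<Rightarrow> bool" where
  "wanda_wins 0 w s = has_root_in_frac (cubic (\<lambda>i. the (s i)))"
| "wanda_wins (Suc k) w s =
     (if w then (\<exists>i c. legal_move s i c \<and> wanda_wins k False (s(i \<mapsto> c)))
      else (\<forall>i c. legal_move s i c \<longrightarrow> wanda_wins k True (s(i \<mapsto> c))))"

end

theory Submission
  imports Defs
begin

lemma poly_cubic_frac:
  "poly (map_poly (\<lambda>c. Fract c 1) (cubic a)) X =
     Fract (a 0) 1 + X * (Fract (a 1) 1 + X * (Fract (a 2) 1 + X * Fract (a 3) 1))"
  unfolding cubic_def by (simp add: map_poly_pCons Zero_fract_def[symmetric])

lemma root_O:
  assumes "a 0 + x * (a 1 + x * (a 2 + x * a 3)) = 0"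
  shows "has_root_in_frac (cubic a)"
  unfolding has_root_in_frac_def poly_cubic_frac
  using assms by (intro exI[of _ "Fract x 1"]) (simp add: fract_collapse)

lemma root_inv:
  assumes "u \<noteq> 0" "a 3 + u * (a 2 + u * (a 1 + u * a 0)) = 0"
  shows "has_root_in_frac (cubic a)"
proof -
  have "Fract (a 0) 1 + Fract 1 u * (Fract (a 1) 1 + Fract 1 u * (Fract (a 2) 1 + Fract 1 u * Fract (a 3) 1))
     = Fract (a 3 + u * (a 2 + u * (a 1 + u * a 0))) (u*u*u)"
    using assms(1) by (simp add: eq_fract algebra_simps)
  then show ?thesis unfolding has_root_in_frac_def poly_cubic_frac
    using assms by (intro exI[of _ "Fract 1 u"]) (simp add: fract_collapse)
qed

lemma unif_unit:
  assumes "is_uniformizer p" "\<not> p dvd x" shows "x dvd 1"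
proof -
  have "x \<noteq> 0" using assms(2) by auto
  then obtain u n where u: "u dvd 1" "x = u * p ^ n" using assms(1) unfolding is_uniformizer_def by blast
  show ?thesis
  proof (cases n)
    case 0 then show ?thesis using u by simp
  next
    case (Suc m) then have "p dvd x" using u by simp
    then show ?thesis using assms(2) by simp
  qed
qed

lemma unif_zero:
  assumes "is_uniformizer p" "\<And>n. p ^ n dvd x" shows "x = 0"
proof (rule ccontr)
  assume "x \<noteq> 0"
  then obtain u m where u: "u dvd 1" "x = u * p ^ m" using assms(1) unfolding is_uniformizer_def by blast
  have "p ^ m * p dvd p ^ m * u" using assms(2)[of "Suc m"] u by (simp add: mult.commute)
  moreover have "p ^ m \<noteq> 0" using assms(1) unfolding is_uniformizer_def by simp
  moreover have "p \<noteq> 0" using assms(1) unfolding is_uniformizer_def by simp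
  ultimately have "p dvd u" by auto
  then have "p dvd 1" using u(1) dvd_trans by blast
  then show False using assms(1) unfolding is_uniformizer_def by simp
qed

lemma hensel:
  fixes a0 a1 a2 a3 :: "'a::idom"
  assumes c: "complete_dvr TYPE('a)" and p: "is_uniformizer p"
    and h0: "p dvd a0" and h1: "a1 dvd 1"
  shows "\<exists>x. a0 + x * (a1 + x * (a2 + x * a3)) = 0"
proof -
  obtain b where b: "a1 * b = 1" using h1 by (metis dvdE)
  define T where "T x = - b * (a0 + x * x * (a2 + x * a3))" for x
  define G where "G x y = - b * ((x + y) * a2 + (x * x + x * y + y * y) * a3)" for x y
  have key: "T x - T y = (x - y) * G x y" for x y
    by (simp add: T_def G_def algebra_simps)
  have Gp: "p dvd G x y" if "p dvd x" "p dvd y" for x y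
  proof -
    have "p dvd (x + y) * a2" using that by (intro dvd_mult2 dvd_add)
    moreover have "p dvd (x * x + x * y + y * y) * a3" using that by (intro dvd_mult2 dvd_add) auto
    ultimately have "p dvd (x + y) * a2 + (x * x + x * y + y * y) * a3" by (rule dvd_add)
    then show ?thesis unfolding G_def by (rule dvd_mult)
  qed
  define s where "s = rec_nat 0 (\<lambda>_ x. T x)"
  have s0: "s 0 = 0" and sS: "s (Suc n) = T (s n)" for n by (simp_all add: s_def)
  have sp: "p dvd s n" for n
  proof (induction n)
    case 0 then show ?case by (simp add: s0)
  next
    case (Suc n)
    have "p dvd s n * s n * (a2 + s n * a3)" using Suc by (intro dvd_mult2) simp
    then have "p dvd a0 + s n * s n * (a2 + s n * a3)" using h0 by (intro dvd_add)
    then show ?case unfolding sS T_def by (rule dvd_mult)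
  qed
  have cauchy: "p ^ n dvd (s (Suc n) - s n)" for n
  proof (induction n)
    case 0 then show ?case by simp
  next
    case (Suc n)
    have "s (Suc (Suc n)) - s (Suc n) = (s (Suc n) - s n) * G (s (Suc n)) (s n)"
      by (simp add: sS key)
    moreover have "p ^ n * p dvd (s (Suc n) - s n) * G (s (Suc n)) (s n)"
      using Suc Gp[OF sp sp] by (rule mult_dvd_mono)
    ultimately show ?case by (simp add: mult.commute)
  qed
  obtain x where x: "\<And>n. p ^ n dvd (x - s n)"
    using c p cauchy unfolding complete_dvr_def by blast
  have "p ^ n dvd (x - T x)" for n
  proof -
    have e: "x - T x = (x - s (Suc n)) + (s n - x) * G (s n) x"
      by (simp add: sS key[symmetric])
    have "p ^ n dvd p ^ Suc n" by simp
    then have d1: "p ^ n dvd (x - s (Suc n))" using x dvd_trans by blast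
    have "p ^ n dvd (s n - x)" using x[of n] by (metis dvd_minus_iff minus_diff_eq)
    then have d2: "p ^ n dvd (s n - x) * G (s n) x" by simp
    show ?thesis unfolding e using d1 d2 by simp
  qed
  then have "x - T x = 0" using unif_zero[OF p] by blast
  moreover have "a1 * (x - T x) = a1 * x + (a1 * b) * (a0 + x * x * (a2 + x * a3))"
    by (simp add: T_def algebra_simps)
  then have "a1 * (x - T x) = a0 + x * (a1 + x * (a2 + x * a3))"
    using b by (simp add: algebra_simps)
  ultimately show ?thesis by (intro exI[of _ x]) simp
qed

lemma rootA:
  assumes c: "complete_dvr TYPE('a::idom)" and p: "is_uniformizer (p::'a)"
    and "a 1 dvd 1" "p dvd a 0"
  shows "has_root_in_frac (cubic a)"
  using hensel[OF c p assms(4) assms(3), of "a 2" "a 3"] root_O by blast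

lemma rootB:
  assumes c: "complete_dvr TYPE('a::idom)" and p: "is_uniformizer (p::'a)"
    and "a 2 dvd 1" "p dvd a 3" "a 3 \<noteq> 0"
  shows "has_root_in_frac (cubic a)"
proof -
  obtain u where u: "a 3 + u * (a 2 + u * (a 1 + u * a 0)) = 0"
    using hensel[OF c p assms(4) assms(3), of "a 1" "a 0"] by blast
  then have "u \<noteq> 0" using assms(5) by auto
  then show ?thesis using u root_inv by blast
qed

lemma rootC:
  assumes c: "complete_dvr TYPE('a::idom)" and p: "is_uniformizer (p::'a)"
    and a: "a 0 = c0" "a 1 = 1" "a 2 = d" "a 3 = p" and pd: "p dvd d"
  shows "has_root_in_frac (cubic a)"
proof -
  obtain d' where d': "d = p * d'" using pd by blast
  define b1 where "b1 = 1 - 2 * d * c0 + 3 * p * c0 * c0"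
  have b1e: "b1 = 1 + p * (3 * c0 * c0 - 2 * d' * c0)" unfolding b1_def d' by (simp add: algebra_simps)
  have "\<not> p dvd b1"
  proof
    assume "p dvd b1"
    then have "p dvd 1 + p * (3 * c0 * c0 - 2 * d' * c0)" unfolding b1e .
    then have "p dvd 1" using dvd_add_left_iff[of p "p * (3 * c0 * c0 - 2 * d' * c0)" 1] by simp
    then show False using p unfolding is_uniformizer_def by simp
  qed
  then have u: "b1 dvd 1" using unif_unit[OF p] by blast
  have "p dvd d * c0 * c0 - p * c0 * c0 * c0" unfolding d' by (simp add: algebra_simps)
  from hensel[OF c p this u, of "d - 3 * p * c0" p] obtain y where
    y: "d * c0 * c0 - p * c0 * c0 * c0 + y * (b1 + y * (d - 3 * p * c0 + y * p)) = 0" by blast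
  have "c0 + (y - c0) * (1 + (y - c0) * (d + (y - c0) * p)) =
        d * c0 * c0 - p * c0 * c0 * c0 + y * (b1 + y * (d - 3 * p * c0 + y * p))"
    unfolding b1_def by (simp add: algebra_simps)
  then have "a 0 + (y - c0) * (a 1 + (y - c0) * (a 2 + (y - c0) * a 3)) = 0" using y a by simp
  then show ?thesis by (rule root_O)
qed

lemma unif_infinite:
  assumes p: "is_uniformizer (p::'a::idom)" shows "infinite (UNIV :: 'a set)"
proof -
  have "inj (\<lambda>n::nat. p ^ n)"
  proof (rule injI)
    fix m n :: nat assume e: "p ^ m = p ^ n"
    show "m = n"
    proof (rule ccontr)
      assume "m \<noteq> n"
      then consider "m < n" | "n < m" by arith
      then show False
      proof cases
        case 1
        then have "p ^ m * 1 = p ^ m * (p * p ^ (n - m - 1))" using e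
          by (metis Suc_diff_Suc add_diff_inverse_nat diff_Suc_1 less_imp_le_nat not_less mult.right_neutral power_Suc power_add)
        then have "p * p ^ (n - m - 1) = 1" using p unfolding is_uniformizer_def by simp
        then have "p dvd 1" by (metis dvd_triv_left)
        then show False using p unfolding is_uniformizer_def by simp
      next
        case 2
        then have "p ^ n * 1 = p ^ n * (p * p ^ (m - n - 1))" using e
          by (metis Suc_diff_Suc add_diff_inverse_nat diff_Suc_1 less_imp_le_nat not_less mult.right_neutral power_Suc power_add)
        then have "p * p ^ (m - n - 1) = 1" using p unfolding is_uniformizer_def by simp
        then have "p dvd 1" by (metis dvd_triv_left)
        then show False using p unfolding is_uniformizer_def by simp
      qed
    qed
  qed
  then show ?thesis using range_inj_infinite by (metis infinite_UNIV_nat infinite_iff_countable_subset top_greatest)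
qed

lemma nonroot:
  assumes "infinite (UNIV :: 'a::idom set)" "(q::'a poly) \<noteq> 0"
  shows "\<exists>r. r \<noteq> 0 \<and> poly q r \<noteq> 0"
proof -
  have "finite (insert 0 {x. poly q x = 0})" using poly_roots_finite[OF assms(2)] by simp
  from ex_new_if_finite[OF assms(1) this] show ?thesis by auto
qed

lemma fun_the_upd: "(\<lambda>i. the ((s(j \<mapsto> c)) i)) = (\<lambda>i. the (s i))(j := c)"
  by auto

lemma last_move:
  assumes p: "is_uniformizer (p::'a::idom)"
    and j: "j \<le> 3" "s j = None" and oth: "\<forall>i\<le>3. i \<noteq> j \<longrightarrow> s i \<noteq> None"
    and n0: "s 0 \<noteq> Some 0" and n3: "s 3 \<noteq> Some 0"
  shows "wanda_wins (Suc 0) True (s :: nat \<Rightarrow> 'a option)"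
proof -
  define a where "a i = the (s i)" for i
  have inf: "infinite (UNIV :: 'a set)" using unif_infinite[OF p] .
  have a0: "a 0 \<noteq> 0" if "j \<noteq> 0" using oth that n0 unfolding a_def by (cases "s 0") auto
  have a3: "a 3 \<noteq> 0" if "j \<noteq> 3" using oth that n3 unfolding a_def by (cases "s 3") auto
  have "\<exists>c. ((j = 0 \<or> j = 3) \<longrightarrow> c \<noteq> 0) \<and> has_root_in_frac (cubic (a(j := c)))"
  proof -
    consider "j = 0" | "j = 1" | "j = 2" | "j = 3" using j(1) by arith
    then show ?thesis
    proof cases
      case 1
      then have "[:a 1, a 2, a 3:] \<noteq> 0" using a3 by simp
      from nonroot[OF inf this] obtain r where r: "r \<noteq> 0" "a 1 + r * (a 2 + r * a 3) \<noteq> 0" by auto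
      show ?thesis
        using 1 r by (intro exI[of _ "- (r * (a 1 + r * (a 2 + r * a 3)))"] conjI impI root_O[of _ r]) auto
    next
      case 2
      then show ?thesis
        by (intro exI[of _ "- (a 0 + a 2 + a 3)"] conjI impI root_O[of _ 1]) auto
    next
      case 3
      then show ?thesis
        by (intro exI[of _ "- (a 0 + a 1 + a 3)"] conjI impI root_O[of _ 1]) auto
    next
      case 4
      then have "[:a 2, a 1, a 0:] \<noteq> 0" using a0 by simp
      from nonroot[OF inf this] obtain r where r: "r \<noteq> 0" "a 2 + r * (a 1 + r * a 0) \<noteq> 0" by auto
      show ?thesis
        using 4 r by (intro exI[of _ "- (r * (a 2 + r * (a 1 + r * a 0)))"] conjI impI root_inv[of r]) auto
    qed
  qed
  then obtain c where c: "(j = 0 \<or> j = 3) \<longrightarrow> c \<noteq> 0" "has_root_in_frac (cubic (a(j := c)))" by blast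
  have "legal_move s j c" using j c unfolding legal_move_def by auto
  moreover have "wanda_wins 0 False (s(j \<mapsto> c))"
  proof -
    have e: "(\<lambda>i. the ((s(j \<mapsto> c)) i)) = a(j := c)" unfolding a_def by auto
    show ?thesis using c(2) by (simp only: wanda_wins.simps e)
  qed
  ultimately show ?thesis by auto
qed

lemma two_left:
  assumes p: "is_uniformizer (p::'a::idom)"
    and j: "j1 \<le> 3" "j2 \<le> 3" "j1 \<noteq> j2" "s j1 = None" "s j2 = None"
    and oth: "\<forall>i\<le>3. i \<noteq> j1 \<and> i \<noteq> j2 \<longrightarrow> s i \<noteq> None"
    and n0: "s 0 \<noteq> Some 0" and n3: "s 3 \<noteq> Some 0"
  shows "wanda_wins (Suc (Suc 0)) False (s :: nat \<Rightarrow> 'a option)"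
proof -
  have "wanda_wins (Suc 0) True (s(i \<mapsto> c))" if l: "legal_move s i c" for i c
  proof -
    have i: "i \<le> 3" "s i = None" "(i = 0 \<or> i = 3) \<longrightarrow> c \<noteq> 0" using l unfolding legal_move_def by auto
    then have "i = j1 \<or> i = j2" using oth by auto
    then show ?thesis
    proof
      assume "i = j1"
      then show ?thesis using j oth i n0 n3 by (intro last_move[OF p, of j2]) auto
    next
      assume "i = j2"
      then show ?thesis using j oth i n0 n3 by (intro last_move[OF p, of j1]) auto
    qed
  qed
  then show ?thesis by simp
qed

lemma three_left:
  assumes p: "is_uniformizer (p::'a::idom)"
    and j: "j1 \<le> 3" "j2 \<le> 3" "j3 \<le> 3" "j1 \<noteq> j2" "j1 \<noteq> j3" "j2 \<noteq> j3"
       "s j1 = None" "s j2 = None" "s j3 = None"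
    and oth: "\<forall>i\<le>3. i \<noteq> j1 \<and> i \<noteq> j2 \<and> i \<noteq> j3 \<longrightarrow> s i \<noteq> None"
    and n0: "s 0 \<noteq> Some 0" and n3: "s 3 \<noteq> Some 0"
  shows "wanda_wins (Suc (Suc (Suc 0))) True (s :: nat \<Rightarrow> 'a option)"
proof -
  have "legal_move s j1 1" using j unfolding legal_move_def by auto
  moreover have "wanda_wins (Suc (Suc 0)) False (s(j1 \<mapsto> 1))"
    using j oth n0 n3 by (intro two_left[OF p, of j2 j3]) auto
  ultimately show ?thesis by (simp only: wanda_wins.simps if_True) blast
qed

lemma wanda_second:
  assumes p: "is_uniformizer (p::'a::idom)"
  shows "wanda_wins 4 False (Map.empty :: nat \<Rightarrow> 'a option)"
proof -
  have "wanda_wins (Suc (Suc (Suc 0))) True ((Map.empty :: nat \<Rightarrow> 'a option)(i \<mapsto> c))"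
    if l: "legal_move Map.empty i c" for i c
  proof -
    have i: "i \<le> 3" "(i = 0 \<or> i = 3) \<longrightarrow> c \<noteq> 0" using l unfolding legal_move_def by auto
    consider "i = 0" | "i = 1" | "i = 2" | "i = 3" using i by arith
    then show ?thesis
    proof cases
      case 1 then show ?thesis using i by (intro three_left[OF p, of 1 2 3]) auto
    next
      case 2 then show ?thesis using i by (intro three_left[OF p, of 0 2 3]) auto
    next
      case 3 then show ?thesis using i by (intro three_left[OF p, of 0 1 3]) auto
    next
      case 4 then show ?thesis using i by (intro three_left[OF p, of 0 1 2]) auto
    qed
  qed
  then show ?thesis by (simp add: numeral_eq_Suc)
qed

lemma wanda_first:
  assumes c: "complete_dvr TYPE('a::idom)" and p: "is_uniformizer (p::'a)"
  shows "wanda_wins 4 True (Map.empty :: nat \<Rightarrow> 'a option)"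
proof -
  have pn: "p \<noteq> 0" using p unfolding is_uniformizer_def by simp
  define s1 where "s1 = (Map.empty :: nat \<Rightarrow> 'a option)(1 \<mapsto> 1)"
  have W: "wanda_wins (Suc (Suc 0)) True (s1(i \<mapsto> c0))" if l: "legal_move s1 i c0" for i c0
  proof -
    have i: "i \<le> 3" "i \<noteq> 1" "(i = 0 \<or> i = 3) \<longrightarrow> c0 \<noteq> 0" using l unfolding legal_move_def s1_def by auto
    show ?thesis
    proof (cases "i = 0")
      case True
      define s3 where "s3 = s1(i \<mapsto> c0, 3 \<mapsto> p)"
      have "wanda_wins 0 True (s3(k \<mapsto> d))" if l2: "legal_move s3 k d" for k d
      proof -
        have "k = 2" using l2 True unfolding legal_move_def s3_def s1_def by (auto split: if_splits)
        define a where "a = (\<lambda>j. the ((s3(k \<mapsto> d)) j))"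
        have a: "a 0 = c0" "a 1 = 1" "a 2 = d" "a 3 = p" unfolding a_def s3_def s1_def using True \<open>k = 2\<close> by auto
        have "has_root_in_frac (cubic a)"
        proof (cases "d dvd 1")
          case True then show ?thesis using a pn by (intro rootB[OF c p]) auto
        next
          case False then have "p dvd d" using unif_unit[OF p] by blast
          then show ?thesis using a by (intro rootC[OF c p]) auto
        qed
        then show ?thesis unfolding a_def by simp
      qed
      then have "wanda_wins (Suc 0) False s3" by simp
      moreover have "legal_move (s1(i \<mapsto> c0)) 3 p" using True pn unfolding legal_move_def s1_def by auto
      ultimately show ?thesis unfolding s3_def by (simp only: wanda_wins.simps if_True) blast
    next
      case False
      define s3 where "s3 = s1(i \<mapsto> c0, 0 \<mapsto> p)"
      have "wanda_wins 0 True (s3(k \<mapsto> d))" if l2: "legal_move s3 k d" for k d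
      proof -
        have "k \<noteq> 0" "k \<noteq> 1" using l2 False unfolding legal_move_def s3_def s1_def by (auto split: if_splits)
        define a where "a = (\<lambda>j. the ((s3(k \<mapsto> d)) j))"
        have a: "a 0 = p" "a 1 = 1" unfolding a_def s3_def s1_def using False i \<open>k \<noteq> 0\<close> \<open>k \<noteq> 1\<close> by auto
        have "has_root_in_frac (cubic a)" using a by (intro rootA[OF c p]) auto
        then show ?thesis unfolding a_def by simp
      qed
      then have "wanda_wins (Suc 0) False s3" by simp
      moreover have "legal_move (s1(i \<mapsto> c0)) 0 p" using False i pn unfolding legal_move_def s1_def by auto
      ultimately show ?thesis unfolding s3_def by (simp only: wanda_wins.simps if_True) blast
    qed
  qed
  then have "wanda_wins (Suc (Suc (Suc 0))) False s1" by simp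
  moreover have "legal_move (Map.empty :: nat \<Rightarrow> 'a option) 1 1" unfolding legal_move_def by simp
  ultimately have "wanda_wins (Suc (Suc (Suc (Suc 0)))) True (Map.empty :: nat \<Rightarrow> 'a option)"
    unfolding s1_def by (simp only: wanda_wins.simps if_True) blast
  then show ?thesis by (simp add: numeral_eq_Suc)
qed

theorem proposition3:
  assumes "complete_dvr TYPE('a::idom)"
  shows "wanda_wins 4 True (Map.empty :: nat \<Rightarrow> 'a option)
       \<and> wanda_wins 4 False (Map.empty :: nat \<Rightarrow> 'a option)"
proof -
  obtain p :: 'a where p: "is_uniformizer p" using assms unfolding complete_dvr_def dvr_def by blast
  show ?thesis using wanda_first[OF assms p] wanda_second[OF p] by blast
qed

end
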